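(* Let $g:\mathbb{R}^n\to\mathbb{R}^n$ be convex, order-preserving and additively homogeneous. Assume that $u\in\mathbb{R}^n$ is harmonic with respect to $g$, i.e. $g(u)=u$. Let $C\subseteq[n]$ be the set of critical nodes of $g$ and $N=[n]\setminus C$. Define $h:\mathbb{R}^N\to\mathbb{R}^N$ by $h(y):=\big(g(\imath_N(y,u_C))\big)_N$, i.e. $h(y)$ is the restriction to $N$ of $g$ applied to the vector whose $N$-coordinates are $y$ and whose $C$-coordinates are those of $u$. Then $h$ has a unique fixed point.
   Context: $[n]=\{1,\dots,n\}$. A map $g:\mathbb{R}^n\to\mathbb{R}^n$ is order-preserving if $x\le y$ (coordinatewise) implies $g(x)\le g(y)$; additively homogeneous if $g(\lambda+x)=\lambda+g(x)$ for all $\lambda\in\mathbb{R}$, $x\in\mathbb{R}^n$ (where $\lambda+x$ adds $\lambda$ to each coordinate); convex if each coordinate $g_i$ is a convex function. A vector $u$ is harmonic for $g$ if $g(u)=u$ and super-harmonic if $g(u)\le u$. The subdifferential of $g$ at $u$ is $\partial g(u)=\{M\in\mathbb{R}^{n\times n}: g(x)-g(u)\ge M(x-u)\ \forall x\in\mathbb{R}^n\}$; for $g$ order-preserving and additively homogeneous its elements are stochastic matrices. For a subset $I\subseteq[n]$ and $x\in\mathbb{R}^n$, $x_I$ is the restriction of $x$ to coordinates in $I$, $M_{IJ}$ the $I\times J$ submatrix of $M$, and for $J=[n]\setminus I$, $\imath_I(y,z)$ denotes the vector of $\mathbb{R}^n$ with $I$-coordinates $y$ and $J$-coordinates $z$.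 A recurrence class of a matrix $M$ is a final communication class $F$ of $M$ (a strongly connected class of the graph of nonzero entries of $M$ with no arc leaving it) such that $M_{FF}$ is stochastic. A node $i\in[n]$ is critical for $g$ (which has harmonic vector $u$) if it belongs to a recurrence class of some $M\in\partial g(u)$; this set does not depend on the choice of the harmonic vector $u$. *)

theory Defs
  imports "HOL-Analysis.Analysis" "HOL-Library.FuncSet"
begin

definition order_preserving :: "(real^'n \<Rightarrow> real^'n) \<Rightarrow> bool" where
  "order_preserving g \<longleftrightarrow>
     (\<forall>x y. (\<forall>i. x $ i \<le> y $ i) \<longrightarrow> (\<forall>i. g x $ i \<le> g y $ i))"

definition additively_homogeneous :: "(real^'n \<Rightarrow> real^'n) \<Rightarrow> bool" where
  "additively_homogeneous g \<longleftrightarrow>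
     (\<forall>(c::real) x. g ((\<chi> i. c) + x) = (\<chi> i. c) + g x)"

definition convex_map :: "(real^'n \<Rightarrow> real^'n) \<Rightarrow> bool" where
  "convex_map g \<longleftrightarrow> (\<forall>i. convex_on UNIV (\<lambda>x. g x $ i))"

definition subdiff :: "(real^'n \<Rightarrow> real^'n) \<Rightarrow> real^'n \<Rightarrow> (real^'n^'n) set" where
  "subdiff g u = {M. \<forall>x. \<forall>i. (g x - g u) $ i \<ge> (M *v (x - u)) $ i}"

definition arcs :: "real^'n^'n \<Rightarrow> ('n \<times> 'n) set" where
  "arcs M = {(i, j). M $ i $ j \<noteq> 0}"

definition comm_class :: "real^'n^'n \<Rightarrow> 'n set \<Rightarrow> bool" where
  "comm_class M F \<longleftrightarrow>
     (\<exists>i. F = {j. (i, j) \<in> (arcs M)\<^sup>* \<and> (j, i) \<in> (arcs M)\<^sup>*})"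

definition final_class :: "real^'n^'n \<Rightarrow> 'n set \<Rightarrow> bool" where
  "final_class M F \<longleftrightarrow> comm_class M F \<and> (\<forall>i\<in>F. \<forall>j. (i, j) \<in> arcs M \<longrightarrow> j \<in> F)"

definition stochastic_on :: "real^'n^'n \<Rightarrow> 'n set \<Rightarrow> bool" where
  "stochastic_on M F \<longleftrightarrow>
     (\<forall>i\<in>F. \<forall>j\<in>F. M $ i $ j \<ge> 0) \<and> (\<forall>i\<in>F. (\<Sum>j\<in>F. M $ i $ j) = 1)"

definition recurrence_class :: "real^'n^'n \<Rightarrow> 'n set \<Rightarrow> bool" where
  "recurrence_class M F \<longleftrightarrow> final_class M F \<and> stochastic_on M F"

definition critical_nodes :: "(real^'n \<Rightarrow> real^'n) \<Rightarrow> real^'n \<Rightarrow> 'n set" where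
  "critical_nodes g u = {i. \<exists>M\<in>subdiff g u. \<exists>F. recurrence_class M F \<and> i \<in> F}"

text \<open>imath I y z: I-coordinates from y, the others from z. Elements of R^I are
  represented as extensional functions in PiE I (\<lambda>_. UNIV).\<close>
definition imath :: "'n set \<Rightarrow> ('n \<Rightarrow> real) \<Rightarrow> real^'n \<Rightarrow> real^'n" where
  "imath I y z = (\<chi> i. if i \<in> I then y i else z $ i)"

end

theory Submission
  imports Defs
begin

lemma subgrad_exists:
  fixes f :: "real^'n \<Rightarrow> real"
  assumes cv: "convex_on UNIV f"
  shows "\<exists>m. \<forall>x. f x \<ge> f a + m \<bullet> (x - a)"
proof -
  define T :: "((real^'n) \<times> real) set" where "T = {(x, t). f x < t}"
  have cT: "convex T"
    unfolding convex_def T_def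
  proof (clarsimp)
    fix x s y t and uu vv :: real
    assume fx: "f x < s" and fy: "f y < t" and u: "0 \<le> uu" and v: "0 \<le> vv" and uv: "uu + vv = 1"
    have "f (uu *\<^sub>R x + vv *\<^sub>R y) \<le> uu * f x + vv * f y"
      using cv u v uv unfolding convex_on_def by auto
    also have "\<dots> < uu * s + vv * t"
    proof (cases "uu = 0")
      case True then have "vv = 1" using uv by simp
      then show ?thesis using True fy by simp
    next
      case False then have "uu > 0" using u by simp
      then have "uu * f x < uu * s" using fx by simp
      moreover have "vv * f y \<le> vv * t" using fy v by (simp add: mult_left_mono)
      ultimately show ?thesis by simp
    qed
    finally show "f (uu *\<^sub>R x + vv *\<^sub>R y) < uu * s + vv * t" .
  qed
  have "(a, f a + 1) \<in> T" unfolding T_def by simp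
  then have ne: "T \<noteq> {}" by blast
  obtain pq b where pq: "pq \<noteq> 0" and le1: "\<forall>w\<in>{(a, f a)}. inner pq w \<le> b"
    and ge1: "\<forall>w\<in>T. inner pq w \<ge> b"
    using separating_hyperplane_sets[OF convex_singleton cT _ ne, of "(a, f a)"]
    unfolding T_def by auto
  obtain p q where pqd: "pq = (p, q)" by (cases pq)
  have A: "p \<bullet> a + q * f a \<le> b" using le1 pqd by simp
  have B: "\<And>x t. f x < t \<Longrightarrow> b \<le> p \<bullet> x + q * t" using ge1 pqd unfolding T_def by auto
  have q0: "q \<ge> 0"
  proof -
    have "b \<le> p \<bullet> a + q * (f a + 1)" using B[of a "f a + 1"] by simp
    then show ?thesis using A by (simp add: algebra_simps)
  qed
  have qn0: "q \<noteq> 0"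
  proof
    assume "q = 0"
    then have "p \<noteq> 0" using pq pqd by (auto simp: zero_prod_def)
    have "b \<le> p \<bullet> (a - p)" using B[of "a - p" "f (a - p) + 1"] \<open>q = 0\<close> by simp
    then have "p \<bullet> p \<le> 0" using A \<open>q = 0\<close> by (simp add: inner_diff_right)
    then show False using \<open>p \<noteq> 0\<close> inner_gt_zero_iff[of p] by linarith
  qed
  have qp: "q > 0" using q0 qn0 by simp
  have C: "p \<bullet> a + q * f a \<le> p \<bullet> x + q * f x" for x
  proof (rule ccontr)
    assume nt: "\<not> ?thesis"
    define d where "d = p \<bullet> a + q * f a - p \<bullet> x - q * f x"
    have dp: "d > 0" using nt d_def by simp
    have "b \<le> p \<bullet> x + q * (f x + d / (2*q))" using B[of x "f x + d/(2*q)"] dp qp by simp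
    also have "\<dots> = p \<bullet> x + q * f x + d/2" using qp by (simp add: field_simps)
    finally have "b \<le> p \<bullet> x + q * f x + d / 2" .
    moreover have "p \<bullet> a + q * f a = p \<bullet> x + q * f x + d" by (simp add: d_def)
    ultimately show False using A dp by linarith
  qed
  show ?thesis
  proof (intro exI allI)
    fix x
    have "q * (f a + (-(1/q)) *\<^sub>R p \<bullet> (x - a)) = q * f a - p \<bullet> (x - a)"
      using qp by (simp add: algebra_simps)
    also have "\<dots> \<le> q * f x" using C[of x] by (simp add: inner_diff_right)
    finally show "f a + (-(1/q)) *\<^sub>R p \<bullet> (x - a) \<le> f x" using qp by simp
  qed
qed

lemma row_stochastic:
  fixes g :: "real^'n \<Rightarrow> real^'n"
  assumes op: "order_preserving g" and ah: "additively_homogeneous g"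
    and sg: "\<forall>w. g w $ i \<ge> g a $ i + m \<bullet> (w - a)"
  shows "(\<forall>j. m $ j \<ge> 0) \<and> (\<Sum>j\<in>UNIV. m $ j) = 1"
proof (intro conjI allI)
  fix j
  define w where "w = a - axis j 1"
  have "\<forall>k. w $ k \<le> a $ k" by (simp add: w_def axis_def)
  then have "g w $ i \<le> g a $ i" using op unfolding order_preserving_def by blast
  moreover have "m \<bullet> (w - a) = - m $ j" by (simp add: w_def inner_axis)
  ultimately show "m $ j \<ge> 0" using sg[rule_format, of w] by simp
next
  have *: "m \<bullet> ((\<chi> i. c) + a - a) = c * (\<Sum>j\<in>UNIV. m $ j)" for c
    by (simp add: inner_vec_def sum_distrib_left mult.commute)
  have "g ((\<chi> i. c) + a) $ i = c + g a $ i" for c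
    using ah unfolding additively_homogeneous_def by simp
  then have "c + g a $ i \<ge> g a $ i + c * (\<Sum>j\<in>UNIV. m $ j)" for c
    using sg[rule_format, of "(\<chi> i. c) + a"] * by simp
  from this[of 1] this[of "-1"] show "(\<Sum>j\<in>UNIV. m $ j) = 1" by simp
qed

lemma row_tight:
  fixes m z :: "real^'n"
  assumes "\<forall>j. m $ j \<ge> 0" "(\<Sum>j\<in>UNIV. m $ j) = 1" "\<forall>j. c \<le> z $ j" "m \<bullet> z \<le> c"
    and "m $ j \<noteq> 0"
  shows "z $ j = c"
proof -
  have eq: "m \<bullet> z - c = (\<Sum>k\<in>UNIV. m $ k * (z $ k - c))"
    using assms(2) by (simp add: inner_vec_def right_diff_distrib sum_subtractf sum_distrib_right[symmetric])
  have nn: "\<And>k. k \<in> UNIV \<Longrightarrow> 0 \<le> m $ k * (z $ k - c)" using assms(1,3) by simp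
  have "(\<Sum>k\<in>UNIV. m $ k * (z $ k - c)) = 0"
    using eq assms(4) sum_nonneg[of UNIV "\<lambda>k. m $ k * (z $ k - c)"] nn by fastforce
  then have "\<forall>k\<in>UNIV. m $ k * (z $ k - c) = 0" using sum_nonneg_eq_0_iff[of UNIV "\<lambda>k. m $ k * (z $ k - c)"] nn by simp
  then have "m $ j * (z $ j - c) = 0" by simp
  then show ?thesis using assms(5) by simp
qed

lemma row_upper:
  fixes m z :: "real^'n"
  assumes "\<forall>j. m $ j \<ge> 0" "(\<Sum>j\<in>UNIV. m $ j) = 1" "\<forall>j. z $ j \<le> c"
  shows "m \<bullet> z \<le> c"
proof -
  have "m \<bullet> z = (\<Sum>k\<in>UNIV. m $ k * z $ k)" by (simp add: inner_vec_def)
  also have "\<dots> \<le> (\<Sum>k\<in>UNIV. m $ k * c)" using assms by (intro sum_mono mult_left_mono) auto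
  also have "\<dots> = c" using assms(2) by (simp add: sum_distrib_right[symmetric])
  finally show ?thesis .
qed

lemma exists_rec_class:
  fixes M :: "real^'n^'n"
  assumes nn: "\<forall>i j. M $ i $ j \<ge> 0" and rs: "\<forall>i. (\<Sum>j\<in>UNIV. M $ i $ j) = 1"
    and ne: "S \<noteq> {}" and cl: "\<forall>i\<in>S. \<forall>j. M $ i $ j \<noteq> 0 \<longrightarrow> j \<in> S"
  shows "\<exists>F i. recurrence_class M F \<and> i \<in> F \<and> F \<subseteq> S"
proof -
  define R where "R i = {j. (i, j) \<in> rtrancl (arcs M)}" for i
  have RS: "R i \<subseteq> S" if "i \<in> S" for i
  proof
    fix j assume "j \<in> R i"
    then have "(i, j) \<in> rtrancl (arcs M)" by (simp add: R_def)
    then show "j \<in> S"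
      by (induction rule: rtrancl_induct) (use that cl in \<open>auto simp: arcs_def\<close>)
  qed
  obtain i1 where "i1 \<in> S" using ne by blast
  obtain i0 where i0: "i0 \<in> S" and mn: "\<forall>i. i \<in> S \<longrightarrow> card (R i0) \<le> card (R i)"
    using ex_has_least_nat[of "\<lambda>i. i \<in> S" i1 "\<lambda>i. card (R i)"] \<open>i1 \<in> S\<close> by blast
  have bk: "(j, i0) \<in> rtrancl (arcs M)" if "j \<in> R i0" for j
  proof -
    have sub: "R j \<subseteq> R i0" using that by (auto simp: R_def)
    have "j \<in> S" using RS[OF i0] that by blast
    then have "card (R i0) \<le> card (R j)" using mn by blast
    then have "R j = R i0" using sub card_subset_eq[of "R i0" "R j"] by (simp add: card_mono antisym)
    moreover have "i0 \<in> R i0" by (simp add: R_def)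
    ultimately have "i0 \<in> R j" by simp
    then show ?thesis by (simp add: R_def)
  qed
  define F where "F = {j. (i0, j) \<in> rtrancl (arcs M) \<and> (j, i0) \<in> rtrancl (arcs M)}"
  have FR: "F = R i0" using bk unfolding F_def R_def by auto
  have fin: "\<forall>i\<in>F. \<forall>j. (i, j) \<in> arcs M \<longrightarrow> j \<in> F"
  proof (intro ballI allI impI)
    fix i j assume "i \<in> F" "(i, j) \<in> arcs M"
    then have "(i0, j) \<in> rtrancl (arcs M)" unfolding F_def by auto
    then show "j \<in> F" unfolding FR R_def by simp
  qed
  have st: "stochastic_on M F"
    unfolding stochastic_on_def
  proof (intro conjI ballI)
    fix i j show "M $ i $ j \<ge> 0" using nn by simp
  next
    fix i assume iF: "i \<in> F"
    have "(\<Sum>j\<in>F. M $ i $ j) = (\<Sum>j\<in>UNIV. M $ i $ j)"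
    proof (rule sum.mono_neutral_left)
      show "\<forall>j\<in>UNIV - F. M $ i $ j = 0" using fin iF by (auto simp: arcs_def)
    qed auto
    then show "(\<Sum>j\<in>F. M $ i $ j) = 1" using rs by simp
  qed
  have "recurrence_class M F"
    unfolding recurrence_class_def final_class_def comm_class_def using fin st F_def by blast
  moreover have "i0 \<in> F" by (simp add: F_def)
  moreover have "F \<subseteq> S" using FR RS[OF i0] by simp
  ultimately show ?thesis by blast
qed

lemma subdiff_row:
  assumes "M \<in> subdiff g u"
  shows "\<forall>w. g w $ i \<ge> g u $ i + M $ i \<bullet> (w - u)"
  using assms unfolding subdiff_def by (auto simp: matrix_vector_mul_component algebra_simps)

lemma no_closed_noncritical:
  fixes g :: "real^'n \<Rightarrow> real^'n"
  assumes op: "order_preserving g" and ah: "additively_homogeneous g"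
    and M: "M \<in> subdiff g u" and ne: "S \<noteq> {}"
    and cl: "\<forall>i\<in>S. \<forall>j. M $ i $ j \<noteq> 0 \<longrightarrow> j \<in> S"
  shows "S \<inter> critical_nodes g u \<noteq> {}"
proof -
  have rows: "(\<forall>j. M $ i $ j \<ge> 0) \<and> (\<Sum>j\<in>UNIV. M $ i $ j) = 1" for i
    using row_stochastic[OF op ah subdiff_row[OF M]] by blast
  obtain F i where "recurrence_class M F" "i \<in> F" "F \<subseteq> S"
    using exists_rec_class[of M S] rows ne cl by blast
  then have "i \<in> critical_nodes g u" "i \<in> S" using M unfolding critical_nodes_def by blast+
  then show ?thesis by blast
qed

theorem lemma3p1:
  fixes g :: "real^'n \<Rightarrow> real^'n" and u :: "real^'n"
  assumes "convex_map g" and "order_preserving g" and "additively_homogeneous g"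
    and "g u = u"
  defines "C \<equiv> critical_nodes g u"
  defines "N \<equiv> UNIV - C"
  defines "h \<equiv> (\<lambda>y. restrict (\<lambda>i. g (imath N y u) $ i) N)"
  shows "\<exists>!y. y \<in> N \<rightarrow>\<^sub>E (UNIV::real set) \<and> h y = y"
proof -
  note op = assms(2) and ah = assms(3) and gu = assms(4)
  have sg: "\<exists>sx. \<forall>i w. g w $ i \<ge> g a $ i + sx i \<bullet> (w - a)" for a
  proof -
    have "\<forall>i. \<exists>m. \<forall>w. g w $ i \<ge> g a $ i + m \<bullet> (w - a)"
      using subgrad_exists assms(1) unfolding convex_map_def by blast
    then show ?thesis by (rule choice)
  qed
  define y0 where "y0 = restrict (\<lambda>i. u $ i) N"
  have im0: "imath N y0 u = u" by (simp add: imath_def y0_def vec_eq_iff)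
  have y0P: "y0 \<in> N \<rightarrow>\<^sub>E (UNIV::real set)" by (simp add: y0_def)
  have hy0: "h y0 = y0" unfolding h_def im0 gu by (simp add: y0_def)
  have uniq: "y = y0" if yP: "y \<in> N \<rightarrow>\<^sub>E (UNIV::real set)" and hy: "h y = y" for y
  proof -
    define x where "x = imath N y u"
    define z where "z = x - u"
    have xN: "x $ i = y i" if "i \<in> N" for i using that by (simp add: x_def imath_def)
    have fx: "g x $ i = x $ i" if "i \<in> N" for i
    proof -
      have "h y i = y i" using hy by simp
      then show ?thesis using that xN by (simp add: h_def x_def)
    qed
    have zC: "z $ i = 0" if "i \<notin> N" for i using that by (simp add: z_def x_def imath_def)
    have crit: "S \<inter> C \<noteq> {}" if "M \<in> subdiff g u" "S \<noteq> {}" "\<forall>i\<in>S. \<forall>j. M $ i $ j \<noteq> 0 \<longrightarrow> j \<in> S" for M S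
      using no_closed_noncritical[OF op ah that] C_def by simp
    have finN: "finite N" by simp
    have zN: "z $ i = 0" if "i \<in> N" for i
    proof (rule ccontr)
      assume nz: "z $ i \<noteq> 0"
      obtain su where su: "\<forall>i w. g w $ i \<ge> g u $ i + su i \<bullet> (w - u)" using sg by blast
      obtain sx where sx: "\<forall>i w. g w $ i \<ge> g x $ i + sx i \<bullet> (w - x)" using sg by blast
      have stu: "(\<forall>j. su i $ j \<ge> 0) \<and> (\<Sum>j\<in>UNIV. su i $ j) = 1" for i
        using row_stochastic[OF op ah] su by blast
      have stx: "(\<forall>j. sx i $ j \<ge> 0) \<and> (\<Sum>j\<in>UNIV. sx i $ j) = 1" for i
        using row_stochastic[OF op ah] sx by blast
      show False
      proof (cases "\<exists>k\<in>N. z $ k > 0")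
        case True
        define lam where "lam = Max ((\<lambda>k. z $ k) ` N)"
        define S where "S = {k\<in>N. z $ k = lam}"
        have Nne: "N \<noteq> {}" using True by blast
        obtain k0 where k0: "k0 \<in> N" "z $ k0 > 0" using True by blast
        have "z $ k0 \<le> lam" unfolding lam_def using k0 finN by simp
        then have lampos: "lam > 0" using k0 by simp
        have zle: "z $ k \<le> lam" for k
        proof (cases "k \<in> N")
          case True then show ?thesis unfolding lam_def by (simp add: finN)
        next
          case False then show ?thesis using zC lampos by simp
        qed
        have "lam \<in> (\<lambda>k. z $ k) ` N" unfolding lam_def using Nne finN by (intro Max_in) auto
        then have Sne: "S \<noteq> {}" unfolding S_def by auto
        define M where "M = (\<chi> i. if i \<in> S then sx i else su i)"
        have rowS: "sx i $ j \<noteq> 0 \<Longrightarrow> j \<in> S" "sx i \<bullet> z = lam" if iS: "i \<in> S" for i j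
        proof -
          have iN: "i \<in> N" and zi: "z $ i = lam" using iS by (auto simp: S_def)
          have gxi: "g x $ i = u $ i + lam" using fx[OF iN] zi by (simp add: z_def)
          have "g u $ i \<ge> g x $ i + sx i \<bullet> (u - x)" using sx by blast
          then have ge: "sx i \<bullet> z \<ge> lam" using gxi gu
            by (simp add: z_def inner_diff_right)
          have le: "sx i \<bullet> z \<le> lam" using row_upper[of "sx i" z lam] stx zle by blast
          show "sx i \<bullet> z = lam" using ge le by simp
          assume nz: "sx i $ j \<noteq> 0"
          have "(-z) $ j = -lam"
            using row_tight[of "sx i" "-lam" "-z" j] stx zle ge nz by (simp add: inner_minus_right)
          then have "z $ j = lam" by simp
          moreover from this have "j \<in> N" using zC[of j] lampos by fastforce
          ultimately show "j \<in> S" by (simp add: S_def)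
        qed
        have "M \<in> subdiff g u"
          unfolding subdiff_def
        proof (clarsimp simp: matrix_vector_mul_component)
          fix w i
          show "M $ i \<bullet> (w - u) \<le> g w $ i - g u $ i"
          proof (cases "i \<in> S")
            case True
            have iN: "i \<in> N" and zi: "z $ i = lam" using True by (auto simp: S_def)
            have gxi: "g x $ i = u $ i + lam" using fx[OF iN] zi by (simp add: z_def)
            have "g w $ i \<ge> g x $ i + sx i \<bullet> (w - x)" using sx by blast
            moreover have "w - x = (w - u) - z" by (simp add: z_def)
            ultimately have "g w $ i \<ge> u $ i + lam + sx i \<bullet> (w - u) - sx i \<bullet> z"
              using gxi by (simp add: inner_diff_right)
            then show ?thesis using rowS(2)[OF True] True gu by (simp add: M_def)
          next
            case False
            then show ?thesis using su by (simp add: M_def algebra_simps)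
          qed
        qed
        moreover have "\<forall>i\<in>S. \<forall>j. M $ i $ j \<noteq> 0 \<longrightarrow> j \<in> S"
          using rowS(1) by (simp add: M_def)
        ultimately have "S \<inter> C \<noteq> {}" using crit Sne by blast
        moreover have "S \<subseteq> N" by (auto simp: S_def)
        ultimately show False using N_def by blast
      next
        case False
        then have zneg: "z $ i < 0" using nz that by force
        define mu where "mu = Min ((\<lambda>k. z $ k) ` N)"
        define S where "S = {k\<in>N. z $ k = mu}"
        have Nne: "N \<noteq> {}" using that by blast
        have "mu \<le> z $ i" unfolding mu_def using that finN by simp
        then have muneg: "mu < 0" using zneg by simp
        have zge: "mu \<le> z $ k" for k
        proof (cases "k \<in> N")
          case True then show ?thesis unfolding mu_def by (simp add: finN)
        next
          case False then show ?thesis using zC muneg by simp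
        qed
        have "mu \<in> (\<lambda>k. z $ k) ` N" unfolding mu_def using Nne finN by (intro Min_in) auto
        then have Sne: "S \<noteq> {}" unfolding S_def by auto
        define M where "M = (\<chi> i. su i)"
        have MS: "M \<in> subdiff g u"
          unfolding subdiff_def using su by (clarsimp simp: matrix_vector_mul_component M_def algebra_simps)
        have "\<forall>i\<in>S. \<forall>j. M $ i $ j \<noteq> 0 \<longrightarrow> j \<in> S"
        proof (intro ballI allI impI)
          fix i j assume iS: "i \<in> S" and nz: "M $ i $ j \<noteq> 0"
          have iN: "i \<in> N" and zi: "z $ i = mu" using iS by (auto simp: S_def)
          have gxi: "g x $ i = u $ i + mu" using fx[OF iN] zi by (simp add: z_def)
          have "g x $ i \<ge> g u $ i + su i \<bullet> (x - u)" using su by blast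
          then have le: "su i \<bullet> z \<le> mu" using gxi gu by (simp add: z_def)
          have "z $ j = mu" using row_tight[of "su i" mu z j] stu zge le nz by (simp add: M_def)
          moreover from this have "j \<in> N" using zC[of j] muneg by fastforce
          ultimately show "j \<in> S" by (simp add: S_def)
        qed
        then have "S \<inter> C \<noteq> {}" using crit MS Sne by blast
        moreover have "S \<subseteq> N" by (auto simp: S_def)
        ultimately show False using N_def by blast
      qed
    qed
    show "y = y0"
    proof (rule PiE_ext[OF yP y0P])
      fix i assume iN: "i \<in> N"
      have "y i = x $ i" using xN[OF iN] by simp
      also have "\<dots> = u $ i" using zN[OF iN] by (simp add: z_def)
      finally show "y i = y0 i" using iN by (simp add: y0_def)
    qed
  qed
  show ?thesis
  proof (rule ex1I[of _ y0])
    show "y0 \<in> N \<rightarrow>\<^sub>E (UNIV::real set) \<and> h y0 = y0" using y0P hy0 by simp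
  next
    fix y assume "y \<in> N \<rightarrow>\<^sub>E (UNIV::real set) \<and> h y = y"
    then show "y = y0" using uniq by simp
  qed
qed

end
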